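(* Let $(\mathbf F,\prec)$ be an IS-family over a finite set $V$. Then for every $S\in\mathbf F$, $hat(S)=S\setminus Vis(S)$.
   Context: Let $V$ be a finite set, $n=|V|$, $\mathbf F$ a family of subsets of $V$ and $\prec$ a strict partial order on $\mathbf F$; $S\preceq S'$ means $S\prec S'$ or $S=S'$. For $S\in\mathbf F$ and $v\in V$, $S$ covers $v$ if there is $S'\in\mathbf F$ with $S'\prec S$ and $v\in S'\setminus S$. $Pred(S)$ is the set of $S'\in\mathbf F$ with $S'\prec S$ such that there is no $S''\in\mathbf F$ with $S'\prec S''\prec S$. The visible set $Vis(S)$ is the set of $v\in V$ such that $v\in S'$ for some $S'\in Pred(S)$ and $v$ is not covered by any element of $Pred(S)$. For $S\in\mathbf F$ and $v\in S$, a witness of $v$ w.r.t. $S$ is a $\prec$-minimal element $S'\in\mathbf F$ with $S\prec S'$ and $v\in S\setminus S'$. $(\mathbf F,\prec)$ is an IS-family if: (SE) there is a unique element $sm(\mathbf F)\in\mathbf F$ with $sm(\mathbf F)\prec S$ for every other $S\in\mathbf F$; (SM) $S_1\prec S_2$ implies $|S_1|<|S_2|$; (SW) for every $S\in\mathbf F$ and $v\in S$ there is at most one witness of $v$ w.r.t. $S$; (TE) if $S_1\prec S_2\prec S_3$ are in $\mathbf F$ and $v\in S_1\setminus S_2$ then $v\in S_1\setminus S_3$; (LVS) for every $S\in\mathbf F$ and $S'\in Pred(S)$, $|S'|\le |Vis(S)|$; (DVS) for every $S\in\mathbf F$ with $S\ne sm(\mathbf F)$, $Vis(S)$ is not a subset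 of $S$; (EC) $sm(\mathbf F)$ can be computed in $O(n^3)$ time, for given $S\in\mathbf F$ and $v\in S$ the witness of $v$ w.r.t. $S$ can be computed (or its nonexistence reported) in $O(n^3)$ time, and $S_1\prec S_2$ can be tested in $O(|S_1|)$ time. Notation: $hat(S)=S\setminus\bigcup_{S'\prec S}S'$. *)

theory Defs
  imports Main
begin

definition strict_po_on :: "'a set set \<Rightarrow> ('a set \<Rightarrow> 'a set \<Rightarrow> bool) \<Rightarrow> bool" where
  "strict_po_on F lt \<longleftrightarrow>
     (\<forall>S\<in>F. \<not> lt S S) \<and>
     (\<forall>S1\<in>F. \<forall>S2\<in>F. \<forall>S3\<in>F. lt S1 S2 \<and> lt S2 S3 \<longrightarrow> lt S1 S3)"

definition covers :: "'a set set \<Rightarrow> ('a set \<Rightarrow> 'a set \<Rightarrow> bool) \<Rightarrow> 'a set \<Rightarrow> 'a \<Rightarrow> bool" where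
  "covers F lt S v \<longleftrightarrow> (\<exists>S'\<in>F. lt S' S \<and> v \<in> S' - S)"

definition Pred :: "'a set set \<Rightarrow> ('a set \<Rightarrow> 'a set \<Rightarrow> bool) \<Rightarrow> 'a set \<Rightarrow> 'a set set" where
  "Pred F lt S = {S' \<in> F. lt S' S \<and> \<not> (\<exists>S''\<in>F. lt S' S'' \<and> lt S'' S)}"

definition Vis :: "'a set set \<Rightarrow> ('a set \<Rightarrow> 'a set \<Rightarrow> bool) \<Rightarrow> 'a set \<Rightarrow> 'a set" where
  "Vis F lt S = {v. (\<exists>S'\<in>Pred F lt S. v \<in> S') \<and> \<not> (\<exists>S'\<in>Pred F lt S. covers F lt S' v)}"

definition is_witness :: "'a set set \<Rightarrow> ('a set \<Rightarrow> 'a set \<Rightarrow> bool) \<Rightarrow> 'a set \<Rightarrow> 'a \<Rightarrow> 'a set \<Rightarrow> bool" where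
  "is_witness F lt S v S' \<longleftrightarrow>
     S' \<in> F \<and> lt S S' \<and> v \<in> S - S' \<and>
     \<not> (\<exists>T\<in>F. lt T S' \<and> lt S T \<and> v \<in> S - T)"

definition sm :: "'a set set \<Rightarrow> ('a set \<Rightarrow> 'a set \<Rightarrow> bool) \<Rightarrow> 'a set" where
  "sm F lt = (THE s. s \<in> F \<and> (\<forall>S\<in>F. S \<noteq> s \<longrightarrow> lt s S))"

definition hat :: "'a set set \<Rightarrow> ('a set \<Rightarrow> 'a set \<Rightarrow> bool) \<Rightarrow> 'a set \<Rightarrow> 'a set" where
  "hat F lt S = S - \<Union>{S' \<in> F. lt S' S}"

text \<open>IS-family, conditions (SE),(SM),(SW),(TE),(LVS),(DVS). The algorithmic
  condition (EC) is a running-time requirement and is not expressible here.\<close>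

definition IS_family :: "'a set \<Rightarrow> 'a set set \<Rightarrow> ('a set \<Rightarrow> 'a set \<Rightarrow> bool) \<Rightarrow> bool" where
  "IS_family V F lt \<longleftrightarrow>
     finite V \<and> F \<subseteq> Pow V \<and> strict_po_on F lt \<and>
     \<comment> \<open>SE\<close>
     (\<exists>!s. s \<in> F \<and> (\<forall>S\<in>F. S \<noteq> s \<longrightarrow> lt s S)) \<and>
     \<comment> \<open>SM\<close>
     (\<forall>S1\<in>F. \<forall>S2\<in>F. lt S1 S2 \<longrightarrow> card S1 < card S2) \<and>
     \<comment> \<open>SW\<close>
     (\<forall>S\<in>F. \<forall>v\<in>S. \<forall>W1 W2. is_witness F lt S v W1 \<and> is_witness F lt S v W2 \<longrightarrow> W1 = W2) \<and>
     \<comment> \<open>TE\<close>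
     (\<forall>S1\<in>F. \<forall>S2\<in>F. \<forall>S3\<in>F. \<forall>v. lt S1 S2 \<and> lt S2 S3 \<and> v \<in> S1 - S2 \<longrightarrow> v \<in> S1 - S3) \<and>
     \<comment> \<open>LVS\<close>
     (\<forall>S\<in>F. \<forall>S'\<in>Pred F lt S. card S' \<le> card (Vis F lt S)) \<and>
     \<comment> \<open>DVS\<close>
     (\<forall>S\<in>F. S \<noteq> sm F lt \<longrightarrow> \<not> Vis F lt S \<subseteq> S)"

end

theory Submission
  imports Defs
begin

lemma pred_above:
  assumes "IS_family V F lt" and "S \<in> F" and "S' \<in> F" and "lt S' S"
  shows "\<exists>P\<in>Pred F lt S. S' = P \<or> lt S' P"
proof -
  note H = assms(1)[unfolded IS_family_def]
  have fV: "finite V" using H by (rule conjunct1)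
  have FV: "F \<subseteq> Pow V" using H[THEN conjunct2] by (rule conjunct1)
  have po: "strict_po_on F lt" using H[THEN conjunct2, THEN conjunct2] by (rule conjunct1)
  have SM: "\<forall>S1\<in>F. \<forall>S2\<in>F. lt S1 S2 \<longrightarrow> card S1 < card S2"
    using H[THEN conjunct2, THEN conjunct2, THEN conjunct2, THEN conjunct2] by (rule conjunct1)
  have fF: "finite F" using finite_subset[OF FV] fV by simp
  define X where "X = {T\<in>F. (S' = T \<or> lt S' T) \<and> lt T S}"
  have fX: "finite X" unfolding X_def using fF by simp
  have neX: "S' \<in> X" using assms X_def by simp
  define m where "m = Max (card ` X)"
  have "m \<in> card ` X" unfolding m_def using fX neX by (intro Max_in) auto
  then obtain T where T: "T \<in> X" "card T = m" by auto
  have mx: "\<And>U. U \<in> X \<Longrightarrow> card U \<le> m" using fX m_def by simp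
  have "T \<in> Pred F lt S"
  proof -
    { fix U assume U: "U \<in> F" "lt T U" "lt U S"
      have "S' = T \<or> lt S' T" "T \<in> F" using T X_def by auto
      hence "lt S' U" proof (elim disjE)
        assume "S' = T" thus ?thesis using U by simp
      next
        assume "lt S' T"
        have tr: "\<forall>S1\<in>F. \<forall>S2\<in>F. \<forall>S3\<in>F. lt S1 S2 \<and> lt S2 S3 \<longrightarrow> lt S1 S3"
          using po unfolding strict_po_on_def by (rule conjunct2)
        show ?thesis using tr[rule_format, OF assms(3) \<open>T \<in> F\<close> U(1)] \<open>lt S' T\<close> U(2) by simp
      qed
      hence "U \<in> X" using U X_def by simp
      hence "card U \<le> m" by (rule mx)
      moreover have "card T < card U" using SM U \<open>T \<in> F\<close> by simp
      ultimately have False using T by simp }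
    thus ?thesis using T X_def unfolding Pred_def by auto
  qed
  thus ?thesis using T X_def by auto
qed

theorem proposition1:
  assumes "IS_family V F lt" and "S \<in> F"
  shows "hat F lt S = S - Vis F lt S"
proof
  show "hat F lt S \<subseteq> S - Vis F lt S"
    unfolding hat_def Vis_def Pred_def by auto
next
  note H = assms(1)[unfolded IS_family_def]
  have TE: "\<forall>S1\<in>F. \<forall>S2\<in>F. \<forall>S3\<in>F. \<forall>v. lt S1 S2 \<and> lt S2 S3 \<and> v \<in> S1 - S2 \<longrightarrow> v \<in> S1 - S3"
    using H[THEN conjunct2, THEN conjunct2, THEN conjunct2, THEN conjunct2, THEN conjunct2, THEN conjunct2] by (rule conjunct1)
  show "S - Vis F lt S \<subseteq> hat F lt S"
  proof
    fix v assume v: "v \<in> S - Vis F lt S"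
    show "v \<in> hat F lt S"
    proof (rule ccontr)
      assume "v \<notin> hat F lt S"
      then obtain S' where S': "S' \<in> F" "lt S' S" "v \<in> S'" using v unfolding hat_def by auto
      obtain P where P: "P \<in> Pred F lt S" "S' = P \<or> lt S' P" using pred_above[OF assms S'(1,2)] by blast
      have PF: "P \<in> F" "lt P S" using P unfolding Pred_def by auto
      have vP: "v \<in> P"
      proof (rule ccontr)
        assume "v \<notin> P"
        hence "lt S' P" using P S' by auto
        hence "v \<in> S' - S" using TE[rule_format, OF S'(1) PF(1) assms(2), of v] PF S' \<open>v \<notin> P\<close> by blast
        thus False using v by simp
      qed
      have "\<exists>Q\<in>Pred F lt S. covers F lt Q v" using v vP P unfolding Vis_def by auto
      then obtain Q U where Q: "Q \<in> Pred F lt S" "U \<in> F" "lt U Q" "v \<in> U - Q"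
        unfolding covers_def by auto
      have "Q \<in> F" "lt Q S" using Q unfolding Pred_def by auto
      hence "v \<in> U - S" using TE[rule_format, OF Q(2) \<open>Q \<in> F\<close> assms(2), of v] Q by blast
      thus False using v by simp
    qed
  qed
qed

end
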